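(* Let $\delta > 0$ and $P > 0$, and let $\mathcal{X}$ be a $\delta$-spaced set of real numbers contained in $[-P,P]$. Let $I$ be a finite set, $\mathcal{Y} = \{y_i\}_{i \in I}$ a family of integers and $\{a_i\}_{i \in I}$ complex numbers. Then \[ \sum_{x \in \mathcal{X}} \Big| \sum_{i \in I} a_i e(x y_i) \Big|^2 \leq \pi \left( \mathrm{Card}(\mathcal{X})\, \Delta(\mathcal{Y}) + \frac{\mathrm{Card}(\mathcal{X})}{\delta} \right)^{1/2} (P+2)^{1/2} \, \sup_{k \in \mathbb{Z}} A_{\mathcal{Y}}(k)^{1/2} \, \|a\|^2 , \] where $\Delta(\mathcal{Y}) = \sup_{(i,j) \in I \times I} |y_i - y_j|$, $A_{\mathcal{Y}}(k)$ is the number of pairs $(i,j) \in I \times I$ with $y_i + y_j = k$, and $\|a\|^2 = \sum_{i \in I} |a_i|^2$.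
   Context: $e(z) = e^{2\pi i z}$. For $\delta > 0$, a $\delta$-spaced set of real numbers is a finite set $\mathcal{X}$ of distinct real numbers containing at least two elements such that $|x - x'| \geq \delta$ whenever $x, x'$ are distinct elements of $\mathcal{X}$. *)

theory Defs
  imports "HOL-Analysis.Analysis"
begin

definition e :: "real \<Rightarrow> complex" where
  "e z = exp (2 * complex_of_real pi * \<i> * complex_of_real z)"

definition delta_spaced :: "real \<Rightarrow> real set \<Rightarrow> bool" where
  "delta_spaced \<delta> X \<longleftrightarrow> finite X \<and> card X \<ge> 2 \<and>
     (\<forall>x\<in>X. \<forall>x'\<in>X. x \<noteq> x' \<longrightarrow> \<bar>x - x'\<bar> \<ge> \<delta>)"

definition Delta :: "'i set \<Rightarrow> ('i \<Rightarrow> int) \<Rightarrow> real" where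
  "Delta I y = (if I = {} then 0 else Max ((\<lambda>(i,j). real_of_int \<bar>y i - y j\<bar>) ` (I \<times> I)))"

definition A_count :: "'i set \<Rightarrow> ('i \<Rightarrow> int) \<Rightarrow> int \<Rightarrow> nat" where
  "A_count I y k = card {(i,j) \<in> I \<times> I. y i + y j = k}"

end

theory Submission
  imports Defs
begin

definition sp :: "real \<Rightarrow> real set \<Rightarrow> bool" where
  "sp \<delta> T \<longleftrightarrow> (\<forall>x\<in>T. \<forall>x'\<in>T. x \<noteq> x' \<longrightarrow> \<bar>x - x'\<bar> \<ge> \<delta>)"

lemma e_cis: "e z = cis (2 * pi * z)"
  unfolding e_def cis_conv_exp by (simp add: mult_ac)

lemma norm_e [simp]: "norm (e z) = 1"
  by (simp add: e_cis)

lemma e_add: "e (a + b) = e a * e b"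
  by (simp add: e_cis cis_mult distrib_left)

lemma e_minus: "e (- a) = cnj (e a)"
  by (simp add: e_cis cis_cnj)

lemma e_pow: "e a ^ n = e (real n * a)"
proof -
  have "cis (2*pi*a) ^ n = cis (real n * (2*pi*a))" by (rule Complex.DeMoivre)
  then show ?thesis by (simp add: e_cis mult_ac)
qed

lemma bucket:
  assumes "finite T" "sp \<delta> T" "\<delta> > 0" "T \<subseteq> {a..b}" "a \<le> b"
  shows "real (card T) \<le> (b - a) / \<delta> + 1"
proof (cases "T = {}")
  case True
  then show ?thesis using assms
    by (auto simp: divide_nonneg_pos)
next
  case False
  then have ab: "a \<le> b" using assms(4) by auto
  define f where "f t = nat \<lfloor>(t - a) / \<delta>\<rfloor>" for t
  have inj: "inj_on f T"
  proof (rule inj_onI, rule ccontr)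
    fix t t' assume tt: "t \<in> T" "t' \<in> T" "f t = f t'" "t \<noteq> t'"
    have ta: "t \<ge> a" "t' \<ge> a" using tt assms(4) by auto
    have "\<lfloor>(t - a) / \<delta>\<rfloor> = \<lfloor>(t' - a) / \<delta>\<rfloor>"
      using tt(3) ta assms(3) unfolding f_def
      by (metis divide_nonneg_pos diff_ge_0_iff_ge eq_nat_nat_iff zero_le_floor)
    then have "\<bar>(t - a) / \<delta> - (t' - a) / \<delta>\<bar> < 1"
      by linarith
    moreover have "(t - a) / \<delta> - (t' - a) / \<delta> = (t - t') / \<delta>"
      by (simp add: diff_divide_distrib)
    ultimately have "\<bar>t - t'\<bar> / \<delta> < 1"
      using assms(3) by (simp add: abs_divide)
    then have "\<bar>t - t'\<bar> < \<delta>" using assms(3) by (simp add: divide_less_eq)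
    moreover have "\<bar>t - t'\<bar> \<ge> \<delta>" using assms(2) tt unfolding sp_def by auto
    ultimately show False by simp
  qed
  have sub: "f ` T \<subseteq> {0..nat \<lfloor>(b - a) / \<delta>\<rfloor>}"
  proof
    fix n assume "n \<in> f ` T"
    then obtain t where t: "t \<in> T" "n = f t" by auto
    have "(t - a) / \<delta> \<le> (b - a) / \<delta>" using t assms by (intro divide_right_mono) auto
    then show "n \<in> {0..nat \<lfloor>(b - a) / \<delta>\<rfloor>}" unfolding t f_def
      by (simp add: floor_mono nat_mono)
  qed
  have "card T = card (f ` T)" using card_image[OF inj] by simp
  also have "\<dots> \<le> card {0..nat \<lfloor>(b - a) / \<delta>\<rfloor>}" by (rule card_mono[OF _ sub]) simp
  also have "\<dots> = nat \<lfloor>(b - a) / \<delta>\<rfloor> + 1" by simp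
  finally have "real (card T) \<le> real (nat \<lfloor>(b - a) / \<delta>\<rfloor>) + 1" by linarith
  also have "real (nat \<lfloor>(b - a) / \<delta>\<rfloor>) \<le> (b - a) / \<delta>"
    using ab assms(3) by (simp add: divide_nonneg_pos)
  finally show ?thesis by simp
qed

definition gk :: "real \<Rightarrow> real \<Rightarrow> real \<Rightarrow> real" where
  "gk A c u = (if u \<le> 0 then A else min A (c / u\<^sup>2))"

lemma aux_ineq:
  fixes k :: real assumes "k \<ge> 1"
  shows "1 / k\<^sup>2 + (2 - 2 / k) \<le> 2 - 2 / (k + 1)"
proof -
  have k0: "k > 0" using assms by simp
  have a: "2 / k - 2 / (k + 1) = 2 / (k * (k + 1))"
    using k0 by (simp add: divide_simps)
  have "k * (k + 1) \<le> 2 * k\<^sup>2" using assms by (simp add: power2_eq_square algebra_simps)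
  then have "1 / k\<^sup>2 \<le> 2 / (k * (k + 1))"
    using k0 by (simp add: divide_simps)
  then show ?thesis using a by linarith
qed

lemma sum_gk_aux:
  assumes "\<delta> > 0" "A \<ge> 0" "c \<ge> 0"
  shows "\<And>T. finite T \<Longrightarrow> card T = Suc m \<Longrightarrow> sp \<delta> T \<Longrightarrow> T \<subseteq> {0..} \<Longrightarrow>
     (\<Sum>t\<in>T. gk A c t) \<le> A + c / \<delta>\<^sup>2 * (2 - 2 / real (Suc m))"
proof (induction m)
  case 0
  then obtain t where T: "T = {t}" by (auto simp: card_Suc_eq)
  show ?case using assms by (simp add: T gk_def)
next
  case (Suc m)
  define t where "t = Max T"
  have tT: "t \<in> T" using Suc.prems unfolding t_def by (intro Max_in) auto
  define T' where "T' = T - {t}"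
  have cT': "card T' = Suc m" using Suc.prems tT unfolding T'_def by simp
  have IH: "(\<Sum>t\<in>T'. gk A c t) \<le> A + c / \<delta>\<^sup>2 * (2 - 2 / real (Suc m))"
    using Suc.prems cT' by (intro Suc.IH) (auto simp: T'_def sp_def)
  have sub: "T \<subseteq> {0..t}" using Suc.prems unfolding t_def by auto
  have t0: "0 \<le> t" using sub tT by auto
  have "real (card T) \<le> (t - 0) / \<delta> + 1"
    by (rule bucket[OF _ _ assms(1) sub t0]) (use Suc.prems in auto)
  then have "real (Suc m) * \<delta> \<le> t" using Suc.prems(2) assms(1)
    by (simp add: field_simps)
  moreover have "real (Suc m) * \<delta> > 0" using assms(1) by (intro mult_pos_pos) auto
  ultimately have tpos: "t > 0" and tge: "real (Suc m) * \<delta> \<le> t"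
    by linarith+
  have "gk A c t \<le> c / t\<^sup>2" using tpos by (simp add: gk_def)
  also have "\<dots> \<le> c / (real (Suc m) * \<delta>)\<^sup>2"
    using tge assms tpos by (intro divide_left_mono power_mono mult_pos_pos) auto
  finally have gt: "gk A c t \<le> c / \<delta>\<^sup>2 * (1 / (real (Suc m))\<^sup>2)"
    by (simp add: power_mult_distrib mult_ac)
  have "(\<Sum>t\<in>T. gk A c t) = gk A c t + (\<Sum>t\<in>T'. gk A c t)"
    using Suc.prems tT unfolding T'_def by (simp add: sum.remove)
  also have "\<dots> \<le> c / \<delta>\<^sup>2 * (1 / (real (Suc m))\<^sup>2) + (A + c / \<delta>\<^sup>2 * (2 - 2 / real (Suc m)))"
    using gt IH by simp
  also have "\<dots> \<le> A + c / \<delta>\<^sup>2 * (2 - 2 / real (Suc (Suc m)))"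
  proof -
    have "1 / (real (Suc m))\<^sup>2 + (2 - 2 / real (Suc m)) \<le> 2 - 2 / (real (Suc m) + 1)"
      by (rule aux_ineq) simp
    then have "1 / (real (Suc m))\<^sup>2 + (2 - 2 / real (Suc m)) \<le> 2 - 2 / real (Suc (Suc m))"
      by simp
    moreover have "c / \<delta>\<^sup>2 \<ge> 0" using assms by simp
    ultimately have "c / \<delta>\<^sup>2 * (1 / (real (Suc m))\<^sup>2 + (2 - 2 / real (Suc m))) \<le> c / \<delta>\<^sup>2 * (2 - 2 / real (Suc (Suc m)))"
      by (rule mult_left_mono)
    then show ?thesis by (simp only: distrib_left)
  qed
  finally show ?case .
qed

lemma sum_gk:
  assumes "\<delta> > 0" "A \<ge> 0" "c \<ge> 0" "finite T" "sp \<delta> T" "T \<subseteq> {0..}"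
  shows "(\<Sum>t\<in>T. gk A c t) \<le> A + 2 * c / \<delta>\<^sup>2"
proof (cases "T = {}")
  case True then show ?thesis using assms by simp
next
  case False
  then obtain m where m: "card T = Suc m" using assms(4) by (metis card_0_eq not0_implies_Suc)
  have "(\<Sum>t\<in>T. gk A c t) \<le> A + c / \<delta>\<^sup>2 * (2 - 2 / real (Suc m))"
    by (rule sum_gk_aux[OF assms(1-3) assms(4) m assms(5,6)])
  also have "\<dots> \<le> A + c / \<delta>\<^sup>2 * 2"
    using assms by (intro add_left_mono mult_left_mono) auto
  also have "\<dots> = A + 2 * c / \<delta>\<^sup>2" by simp
  finally show ?thesis .
qed

definition D :: "nat \<Rightarrow> real \<Rightarrow> complex" where
  "D n t = (\<Sum>j<n. e (real j * t))"

lemma D_le: "norm (D n t) \<le> real n"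
proof -
  have "norm (D n t) \<le> (\<Sum>j<n. norm (e (real j * t)))" unfolding D_def by (rule norm_sum)
  then show ?thesis by simp
qed

lemma norm_e_minus_1: "norm (e t - 1) = 2 * \<bar>sin (pi * t)\<bar>"
proof -
  have "(norm (e t - 1))\<^sup>2 = (cos (2 * (pi * t)) - 1)\<^sup>2 + (sin (2 * (pi * t)))\<^sup>2"
    by (simp add: e_cis cmod_power2 mult_ac)
  also have "\<dots> = 2 - 2 * cos (2 * (pi * t))"
    using sin_cos_squared_add[of "2 * (pi * t)"] by (simp add: power2_eq_square algebra_simps)
  also have "\<dots> = (2 * \<bar>sin (pi * t)\<bar>)\<^sup>2"
    by (simp add: cos_double_sin power_mult_distrib)
  finally have "(norm (e t - 1))\<^sup>2 = (2 * \<bar>sin (pi * t)\<bar>)\<^sup>2" .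
  then show ?thesis by (subst (asm) power2_eq_iff_nonneg) auto
qed

lemma D_sin: "norm (D n t) * \<bar>sin (pi * t)\<bar> \<le> 1"
proof -
  have "D n t = (\<Sum>j<n. e t ^ j)" unfolding D_def by (simp add: e_pow)
  then have "e t ^ n - 1 = (e t - 1) * D n t" by (simp add: power_diff_1_eq)
  then have "norm (e t - 1) * norm (D n t) = norm (e t ^ n - 1)" by (simp add: norm_mult)
  also have "\<dots> \<le> norm (e t ^ n) + norm (1::complex)" by (rule norm_triangle_ineq4)
  also have "\<dots> = 2" by (simp add: norm_power)
  finally show ?thesis unfolding norm_e_minus_1 by (simp add: mult_ac)
qed

lemma sin_ge_cubic:
  fixes x :: real
  assumes "x \<ge> 0" shows "sin x \<ge> x - x ^ 3 / 6"
proof -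
  have f: "(fact 3 :: real) = 6" by (simp add: numeral_3_eq_3)
  have a: "\<bar>x\<bar> ^ 3 = x ^ 3" using assms by simp
  have "\<bar>sin x - (\<Sum>m<3. sin_coeff m * x ^ m)\<bar> \<le> inverse (fact 3) * \<bar>x\<bar> ^ 3"
    by (rule Maclaurin_sin_bound)
  also have "inverse (fact 3) * \<bar>x\<bar> ^ 3 = x ^ 3 / 6"
    unfolding f a by (simp add: field_simps)
  also have "(\<Sum>m<3. sin_coeff m * x ^ m) = x"
    by (simp add: numeral_3_eq_3 sin_coeff_def)
  finally have "\<bar>sin x - x\<bar> \<le> x ^ 3 / 6" .
  then show ?thesis by linarith
qed

lemma sin_pi_lower_half:
  assumes "0 \<le> s" "s \<le> 1/2" shows "sin (pi * s) \<ge> 9/5 * s"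
proof -
  have "(6283/2000::real) \<le> 3.141592653588" "(3.1415926535899::real) \<le> 3927/1250" by simp_all
  then have p1: "pi \<ge> 6283/2000" and p2: "pi \<le> 3927/1250" using pi_approx by linarith+
  have "pi ^ 3 \<le> (3927/1250) ^ 3" using p2 by (intro power_mono) auto
  moreover have "(3927/1250::real) ^ 3 \<le> 311/10" by (simp add: power3_eq_cube)
  ultimately have p3: "pi ^ 3 \<le> 311/10" by linarith
  have s2: "s\<^sup>2 \<le> 1/4" using power_mono[of s "1/2" 2] assms by (simp add: power_divide)
  have "pi ^ 3 * s\<^sup>2 \<le> 311/10 * (1/4)"
    using p3 s2 by (intro mult_mono) auto
  then have "pi ^ 3 * s\<^sup>2 * s \<le> 311/10 * (1/4) * s" using assms by (intro mult_right_mono) auto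
  then have "(pi * s) ^ 3 / 6 \<le> 311/240 * s"
    by (simp add: power_mult_distrib power2_eq_square power3_eq_cube mult_ac)
  moreover have "sin (pi * s) \<ge> pi * s - (pi * s) ^ 3 / 6"
    using assms by (intro sin_ge_cubic) auto
  moreover have "pi * s \<ge> 6283/2000 * s" using p1 assms by (intro mult_right_mono) auto
  ultimately show ?thesis using assms by linarith
qed

lemma sin_pi_lower:
  assumes "0 \<le> s" "s \<le> 1" shows "sin (pi * s) \<ge> 9/5 * min s (1 - s)"
proof (cases "s \<le> 1/2")
  case True
  then show ?thesis using sin_pi_lower_half[of s] assms by (simp add: min_def)
next
  case False
  have "sin (pi * s) = sin (pi * (1 - s))"
    by (simp add: right_diff_distrib sin_diff)
  also have "\<dots> \<ge> 9/5 * (1 - s)" using sin_pi_lower_half[of "1 - s"] False assms by simp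
  finally show ?thesis using False by (simp add: min_def)
qed

lemma min_add_le: "(a::real) \<ge> 0 \<Longrightarrow> b \<ge> 0 \<Longrightarrow> Q \<ge> 0 \<Longrightarrow> x \<le> a + b \<Longrightarrow> min Q x \<le> min Q a + min Q b"
  by (auto simp: min_def)

definition Hk :: "real \<Rightarrow> real \<Rightarrow> real" where
  "Hk Q t = (if sin (pi * t) = 0 then Q else min Q (1 / (sin (pi * t))\<^sup>2))"

lemma Hk_split:
  assumes "0 \<le> s" "s < 1" "Q \<ge> 0"
  shows "Hk Q s \<le> gk Q (25/81) s + gk Q (25/81) (1 - s)"
proof (cases "s = 0")
  case True
  then show ?thesis using assms by (simp add: Hk_def gk_def)
next
  case False
  then have s0: "s > 0" using assms by simp
  have sp: "sin (pi * s) > 0" using s0 assms by (intro sin_gt_zero) auto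
  define m where "m = min s (1 - s)"
  have m0: "m > 0" using s0 assms by (simp add: m_def)
  have "sin (pi * s) \<ge> 9/5 * m" using sin_pi_lower[of s] assms unfolding m_def by simp
  then have "(9/5 * m)\<^sup>2 \<le> (sin (pi * s))\<^sup>2" using m0 by (intro power_mono) auto
  then have "1 / (sin (pi * s))\<^sup>2 \<le> 1 / (9/5 * m)\<^sup>2" using m0
    by (intro divide_left_mono mult_pos_pos) auto
  also have "\<dots> = (25/81) / m\<^sup>2" using m0 by (simp add: field_simps power2_eq_square)
  also have "\<dots> \<le> (25/81) / s\<^sup>2 + (25/81) / (1 - s)\<^sup>2"
    using s0 assms by (auto simp: m_def min_def)
  finally have b: "1 / (sin (pi * s))\<^sup>2 \<le> (25/81) / s\<^sup>2 + (25/81) / (1 - s)\<^sup>2" .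
  have "(25/81) / s\<^sup>2 \<ge> 0" "(25/81) / (1 - s)\<^sup>2 \<ge> 0" by auto
  have "Hk Q s = min Q (1 / (sin (pi * s))\<^sup>2)" using sp by (simp add: Hk_def)
  also have "\<dots> \<le> min Q ((25/81) / s\<^sup>2) + min Q ((25/81) / (1 - s)\<^sup>2)"
    by (rule min_add_le[OF _ _ assms(3) b]) auto
  also have "\<dots> = gk Q (25/81) s + gk Q (25/81) (1 - s)"
    using s0 assms by (simp add: gk_def)
  finally show ?thesis .
qed

lemma sin_pi_int_add_sq: "(sin (pi * (of_int n + s)))\<^sup>2 = (sin (pi * s))\<^sup>2"
proof -
  have "sin (pi * (of_int n + s)) = cos (pi * of_int n) * sin (pi * s)"
    by (simp add: distrib_left sin_add)
  moreover have "(cos (pi * of_int n))\<^sup>2 = 1" by simp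
  ultimately show ?thesis by (simp add: power_mult_distrib)
qed

lemma Hk_periodic: "Hk Q (of_int n + s) = Hk Q s"
proof -
  have "sin (pi * (of_int n + s)) = 0 \<longleftrightarrow> sin (pi * s) = 0"
    using sin_pi_int_add_sq[of n s] by (metis power_zero_numeral zero_eq_power2)
  then show ?thesis unfolding Hk_def sin_pi_int_add_sq by simp
qed

lemma sp_translate: "sp \<delta> T \<Longrightarrow> sp \<delta> ((\<lambda>t. t + c) ` T)"
  unfolding sp_def by auto

lemma sp_reflect: "sp \<delta> T \<Longrightarrow> sp \<delta> ((\<lambda>t. c - t) ` T)"
  unfolding sp_def by (auto simp: abs_minus_commute)

lemma sp_subset: "sp \<delta> T \<Longrightarrow> S \<subseteq> T \<Longrightarrow> sp \<delta> S"
  unfolding sp_def by auto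

lemma window_sum:
  assumes "\<delta> > 0" "finite X" "sp \<delta> X" "X \<subseteq> {-P..P}" "Q \<ge> 0" "P \<ge> 0"
  shows "(\<Sum>x'\<in>X. Hk Q (x' - x)) \<le> (2 * P + 2) * (2 * (Q + 2 * (25/81) / \<delta>\<^sup>2))"
proof -
  define c :: real where "c = 25/81"
  define W where "W = (\<lambda>x'. \<lfloor>x' - x\<rfloor>) ` X"
  define M where "M = 2 * (Q + 2 * c / \<delta>\<^sup>2)"
  have inner: "(\<Sum>x'\<in>{x'\<in>X. \<lfloor>x' - x\<rfloor> = n}. Hk Q (x' - x)) \<le> M" for n
  proof -
    define Xn where "Xn = {x'\<in>X. \<lfloor>x' - x\<rfloor> = n}"
    have fXn: "finite Xn" using assms(2) unfolding Xn_def by simp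
    have spXn: "sp \<delta> Xn" using assms(3) unfolding Xn_def by (rule sp_subset) auto
    define s where "s x' = x' - x - of_int n" for x'
    have srange: "0 \<le> s x' \<and> s x' < 1" if "x' \<in> Xn" for x'
    proof -
      have "\<lfloor>x' - x\<rfloor> = n" using that unfolding Xn_def by simp
      then show ?thesis unfolding s_def by linarith
    qed
    have "(\<Sum>x'\<in>Xn. Hk Q (x' - x)) = (\<Sum>x'\<in>Xn. Hk Q (s x'))"
    proof (rule sum.cong[OF refl])
      fix x' assume "x' \<in> Xn"
      have "x' - x = of_int n + s x'" unfolding s_def by simp
      then show "Hk Q (x' - x) = Hk Q (s x')" by (simp add: Hk_periodic)
    qed
    also have "\<dots> \<le> (\<Sum>x'\<in>Xn. gk Q c (s x') + gk Q c (1 - s x'))"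
      using srange assms(5) unfolding c_def by (intro sum_mono Hk_split) auto
    also have "\<dots> = (\<Sum>x'\<in>Xn. gk Q c (s x')) + (\<Sum>x'\<in>Xn. gk Q c (1 - s x'))"
      by (rule sum.distrib)
    also have "(\<Sum>x'\<in>Xn. gk Q c (s x')) = (\<Sum>t\<in>(\<lambda>t. t + (- x - of_int n)) ` Xn. gk Q c t)"
      by (subst sum.reindex) (auto simp: inj_on_def s_def algebra_simps)
    also have "(\<Sum>x'\<in>Xn. gk Q c (1 - s x')) = (\<Sum>t\<in>(\<lambda>t. (1 + x + of_int n) - t) ` Xn. gk Q c t)"
      by (subst sum.reindex) (auto simp: inj_on_def s_def algebra_simps)
    also have "(\<Sum>t\<in>(\<lambda>t. t + (- x - of_int n)) ` Xn. gk Q c t) \<le> Q + 2 * c / \<delta>\<^sup>2"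
    proof -
      have "(\<lambda>t. t + (- x - of_int n)) ` Xn \<subseteq> {0..}"
      proof
        fix u assume "u \<in> (\<lambda>t. t + (- x - of_int n)) ` Xn"
        then obtain t where "t \<in> Xn" "u = t + (- x - of_int n)" by auto
        then show "u \<in> {0..}" using srange[of t] by (simp add: s_def)
      qed
      then show ?thesis using fXn assms(1,5) sp_translate[OF spXn]
        by (intro sum_gk) (auto simp: c_def)
    qed
    also have "(\<Sum>t\<in>(\<lambda>t. (1 + x + of_int n) - t) ` Xn. gk Q c t) \<le> Q + 2 * c / \<delta>\<^sup>2"
    proof -
      have "(\<lambda>t. (1 + x + of_int n) - t) ` Xn \<subseteq> {0..}"
      proof
        fix u assume "u \<in> (\<lambda>t. (1 + x + of_int n) - t) ` Xn"
        then obtain t where "t \<in> Xn" "u = (1 + x + of_int n) - t" by auto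
        then show "u \<in> {0..}" using srange[of t] by (simp add: s_def)
      qed
      then show ?thesis using fXn assms(1,5) sp_reflect[OF spXn]
        by (intro sum_gk) (auto simp: c_def)
    qed
    finally show ?thesis unfolding M_def Xn_def by simp
  qed
  have "(\<Sum>x'\<in>X. Hk Q (x' - x)) = (\<Sum>n\<in>W. \<Sum>x'\<in>{x'\<in>X. \<lfloor>x' - x\<rfloor> = n}. Hk Q (x' - x))"
    unfolding W_def by (rule sum.image_gen[OF assms(2)])
  also have "\<dots> \<le> of_nat (card W) * M" by (rule sum_bounded_above) (rule inner)
  also have "\<dots> \<le> (2 * P + 2) * M"
  proof (rule mult_right_mono)
    show "0 \<le> M" unfolding M_def c_def using assms by simp
    show "real (card W) \<le> 2 * P + 2"
    proof (cases "X = {}")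
      case True then show ?thesis using assms by (simp add: W_def)
    next
      case False
      then obtain x0 where "x0 \<in> X" by auto
      then have P0: "P \<ge> 0" using assms(4) by auto
      have "W \<subseteq> {\<lfloor>-P - x\<rfloor>..\<lfloor>P - x\<rfloor>}"
      proof
        fix n assume "n \<in> W"
        then obtain x' where x': "x' \<in> X" "n = \<lfloor>x' - x\<rfloor>" unfolding W_def by auto
        then have "-P \<le> x'" "x' \<le> P" using assms(4) by auto
        then have "\<lfloor>-P - x\<rfloor> \<le> \<lfloor>x' - x\<rfloor>" "\<lfloor>x' - x\<rfloor> \<le> \<lfloor>P - x\<rfloor>"
          by (intro floor_mono; simp)+
        then show "n \<in> {\<lfloor>-P - x\<rfloor>..\<lfloor>P - x\<rfloor>}" using x' by simp
      qed
      then have "card W \<le> card {\<lfloor>-P - x\<rfloor>..\<lfloor>P - x\<rfloor>}" by (intro card_mono) auto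
      also have "\<dots> = nat (\<lfloor>P - x\<rfloor> + 1 - \<lfloor>-P - x\<rfloor>)" by simp
      finally have "real (card W) \<le> real (nat (\<lfloor>P - x\<rfloor> + 1 - \<lfloor>-P - x\<rfloor>))" by simp
      also have "\<dots> \<le> 2 * P + 2"
      proof -
        have f1: "real_of_int \<lfloor>P - x\<rfloor> \<le> P - x" by (rule of_int_floor_le)
        have f2: "-P - x < real_of_int \<lfloor>-P - x\<rfloor> + 1" by (rule floor_correct[THEN conjunct2, simplified])
        have "\<lfloor>-P - x\<rfloor> \<le> \<lfloor>P - x\<rfloor>" using P0 by (intro floor_mono) simp
        then have "real (nat (\<lfloor>P - x\<rfloor> + 1 - \<lfloor>-P - x\<rfloor>)) = real_of_int \<lfloor>P - x\<rfloor> + 1 - real_of_int \<lfloor>-P - x\<rfloor>"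
          by simp
        then show ?thesis using f1 f2 by linarith
      qed
      finally show ?thesis .
    qed
  qed
  finally show ?thesis unfolding M_def c_def .
qed

lemma Hk_sym: "Hk Q (- t) = Hk Q t"
proof -
  have "sin (pi * - t) = - sin (pi * t)" by (metis mult_minus_right sin_minus)
  then show ?thesis unfolding Hk_def by simp
qed

lemma Hk_nonneg: "Q \<ge> 0 \<Longrightarrow> Hk Q t \<ge> 0"
  unfolding Hk_def by (simp add: min_def)


lemma DD:
  assumes "\<bar>sin (pi * t)\<bar> = \<bar>sin (pi * r)\<bar>" "\<bar>sin (pi * s)\<bar> = \<bar>sin (pi * r)\<bar>"
  shows "cmod (D a t) * cmod (D b s) \<le> Hk (real a * real b) r"
proof -
  have ab: "cmod (D a t) * cmod (D b s) \<le> real a * real b"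
    by (intro mult_mono D_le) auto
  show ?thesis
  proof (cases "sin (pi * r) = 0")
    case True then show ?thesis using ab by (simp add: Hk_def)
  next
    case False
    then have sp: "\<bar>sin (pi * r)\<bar> > 0" by simp
    have "cmod (D a t) \<le> 1 / \<bar>sin (pi * r)\<bar>"
      using D_sin[of a t] assms(1) sp by (simp add: le_divide_eq)
    moreover have "cmod (D b s) \<le> 1 / \<bar>sin (pi * r)\<bar>"
      using D_sin[of b s] assms(2) sp by (simp add: le_divide_eq)
    ultimately have "cmod (D a t) * cmod (D b s) \<le> 1 / \<bar>sin (pi * r)\<bar> * (1 / \<bar>sin (pi * r)\<bar>)"
      by (intro mult_mono) auto
    also have "\<dots> = 1 / (sin (pi * r))\<^sup>2" by (simp add: power2_eq_square)
    finally show ?thesis using ab False by (simp add: Hk_def)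
  qed
qed

lemma schur:
  fixes a :: "real \<Rightarrow> real" and H :: "real \<Rightarrow> real"
  assumes "finite X" "\<And>x. x \<in> X \<Longrightarrow> (\<Sum>x'\<in>X. H (x' - x)) \<le> M"
    "\<And>t. H (- t) = H t" "\<And>t. H t \<ge> 0"
  shows "(\<Sum>x\<in>X. \<Sum>x'\<in>X. a x * a x' * H (x' - x)) \<le> M * (\<Sum>x\<in>X. (a x)\<^sup>2)"
proof -
  have "(\<Sum>x\<in>X. \<Sum>x'\<in>X. a x * a x' * H (x' - x))
      \<le> (\<Sum>x\<in>X. \<Sum>x'\<in>X. ((a x)\<^sup>2 / 2) * H (x' - x) + ((a x')\<^sup>2 / 2) * H (x' - x))"
  proof (intro sum_mono)
    fix x x'
    have "a x * a x' \<le> (a x)\<^sup>2 / 2 + (a x')\<^sup>2 / 2"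
      using sum_squares_bound[of "a x" "a x'"] by (simp add: mult.assoc)
    then have "a x * a x' * H (x' - x) \<le> ((a x)\<^sup>2 / 2 + (a x')\<^sup>2 / 2) * H (x' - x)"
      using assms(4) by (intro mult_right_mono) auto
    then show "a x * a x' * H (x' - x) \<le> ((a x)\<^sup>2 / 2) * H (x' - x) + ((a x')\<^sup>2 / 2) * H (x' - x)"
      by (simp add: algebra_simps)
  qed
  also have "\<dots> = (\<Sum>x\<in>X. \<Sum>x'\<in>X. ((a x)\<^sup>2 / 2) * H (x' - x)) + (\<Sum>x\<in>X. \<Sum>x'\<in>X. ((a x')\<^sup>2 / 2) * H (x' - x))"
    by (simp add: sum.distrib)
  finally have S0: "(\<Sum>x\<in>X. \<Sum>x'\<in>X. a x * a x' * H (x' - x)) \<le>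
     (\<Sum>x\<in>X. \<Sum>x'\<in>X. ((a x)\<^sup>2 / 2) * H (x' - x)) + (\<Sum>x\<in>X. \<Sum>x'\<in>X. ((a x')\<^sup>2 / 2) * H (x' - x))" .
  have S2: "(\<Sum>x\<in>X. \<Sum>x'\<in>X. ((a x')\<^sup>2 / 2) * H (x' - x)) = (\<Sum>x'\<in>X. \<Sum>x\<in>X. ((a x')\<^sup>2 / 2) * H (x - x'))"
    by (subst sum.swap) (intro sum.cong refl, metis assms(3) minus_diff_eq)
  have S1: "(\<Sum>x\<in>X. \<Sum>x'\<in>X. ((a x)\<^sup>2 / 2) * H (x' - x)) \<le> M / 2 * (\<Sum>x\<in>X. (a x)\<^sup>2)"
  proof -
    have "(\<Sum>x\<in>X. \<Sum>x'\<in>X. ((a x)\<^sup>2 / 2) * H (x' - x)) = (\<Sum>x\<in>X. ((a x)\<^sup>2 / 2) * (\<Sum>x'\<in>X. H (x' - x)))"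
      by (simp add: sum_distrib_left)
    also have "\<dots> \<le> (\<Sum>x\<in>X. ((a x)\<^sup>2 / 2) * M)"
      using assms(2) by (intro sum_mono mult_left_mono) auto
    also have "\<dots> = M / 2 * (\<Sum>x\<in>X. (a x)\<^sup>2)"
      by (simp add: sum_distrib_left mult_ac)
    finally show ?thesis .
  qed
  have S3: "(\<Sum>x'\<in>X. \<Sum>x\<in>X. ((a x')\<^sup>2 / 2) * H (x - x')) = (\<Sum>x\<in>X. \<Sum>x'\<in>X. ((a x)\<^sup>2 / 2) * H (x' - x))"
    by simp
  show ?thesis using S0 S1 S2 S3 by linarith
qed

definition Bf :: "(real \<Rightarrow> complex) \<Rightarrow> real set \<Rightarrow> int \<Rightarrow> complex" where
  "Bf \<beta> X k = (\<Sum>x\<in>X. \<beta> x * e (x * of_int k))"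

lemma e_mult_cnj: "e a * cnj (e b) = e (a - b)"
  by (simp add: e_cis cis_cnj cis_mult right_diff_distrib)

lemma Bsq: "complex_of_real ((cmod (Bf \<beta> X m))\<^sup>2) =
   (\<Sum>x\<in>X. \<Sum>x'\<in>X. \<beta> x * cnj (\<beta> x') * e ((x - x') * of_int m))"
proof -
  have "complex_of_real ((cmod (Bf \<beta> X m))\<^sup>2) = Bf \<beta> X m * cnj (Bf \<beta> X m)"
    by (rule complex_norm_square)
  also have "\<dots> = (\<Sum>x\<in>X. \<Sum>x'\<in>X. (\<beta> x * e (x * of_int m)) * cnj (\<beta> x' * e (x' * of_int m)))"
    unfolding Bf_def cnj_sum by (rule sum_product)
  also have "\<dots> = (\<Sum>x\<in>X. \<Sum>x'\<in>X. \<beta> x * cnj (\<beta> x') * e ((x - x') * of_int m))"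
  proof (intro sum.cong refl)
    fix x x'
    have "e (x * of_int m) * cnj (e (x' * of_int m)) = e ((x - x') * of_int m)"
      by (simp add: e_mult_cnj left_diff_distrib)
    then show "(\<beta> x * e (x * of_int m)) * cnj (\<beta> x' * e (x' * of_int m)) = \<beta> x * cnj (\<beta> x') * e ((x - x') * of_int m)"
      by (simp add: mult_ac)
  qed
  finally show ?thesis .
qed

lemma swap4: "(\<Sum>a\<in>A. \<Sum>b\<in>B. \<Sum>c\<in>C. \<Sum>d\<in>Dd. f a b c d) = (\<Sum>c\<in>C. \<Sum>d\<in>Dd. \<Sum>a\<in>A. \<Sum>b\<in>B. f a b c d)"
proof -
  have "(\<Sum>a\<in>A. \<Sum>b\<in>B. \<Sum>c\<in>C. \<Sum>d\<in>Dd. f a b c d) = (\<Sum>a\<in>A. \<Sum>c\<in>C. \<Sum>b\<in>B. \<Sum>d\<in>Dd. f a b c d)"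
    by (rule sum.cong[OF refl], rule sum.swap)
  also have "\<dots> = (\<Sum>a\<in>A. \<Sum>c\<in>C. \<Sum>d\<in>Dd. \<Sum>b\<in>B. f a b c d)"
    by (rule sum.cong[OF refl], rule sum.cong[OF refl], rule sum.swap)
  also have "\<dots> = (\<Sum>c\<in>C. \<Sum>a\<in>A. \<Sum>d\<in>Dd. \<Sum>b\<in>B. f a b c d)"
    by (rule sum.swap)
  also have "\<dots> = (\<Sum>c\<in>C. \<Sum>d\<in>Dd. \<Sum>a\<in>A. \<Sum>b\<in>B. f a b c d)"
    by (rule sum.cong[OF refl], rule sum.swap)
  finally show ?thesis .
qed

lemma SU_eq:
  "(\<Sum>u\<in>(\<lambda>j. k0 + int j) ` {..<n}. e (t * of_int u)) = e (t * of_int k0) * D n t"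
proof -
  have "(\<Sum>u\<in>(\<lambda>j. k0 + int j) ` {..<n}. e (t * of_int u)) = (\<Sum>j<n. e (t * of_int (k0 + int j)))"
    by (subst sum.reindex) (auto simp: inj_on_def)
  also have "\<dots> = (\<Sum>j<n. e (t * of_int k0) * e (real j * t))"
    by (intro sum.cong refl) (simp add: e_add[symmetric] algebra_simps)
  also have "\<dots> = e (t * of_int k0) * D n t" unfolding D_def by (simp add: sum_distrib_left)
  finally show ?thesis .
qed

lemma SV_eq:
  "(\<Sum>v\<in>int ` {..<n}. e (- (t * of_int v))) = D n (- t)"
proof -
  have "(\<Sum>v\<in>int ` {..<n}. e (- (t * of_int v))) = (\<Sum>j<n. e (- (t * of_int (int j))))"
    by (subst sum.reindex) (auto simp: inj_on_def)
  also have "\<dots> = D n (- t)" unfolding D_def by (intro sum.cong refl) (simp add: algebra_simps)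
  finally show ?thesis .
qed

lemma dual_bound:
  fixes \<beta> :: "real \<Rightarrow> complex" and K :: "int set" and L R :: nat
  assumes d: "\<delta> > 0" and fX: "finite X" and spX: "sp \<delta> X" and XP: "X \<subseteq> {-P..P}" and P0: "P \<ge> 0"
    and fK: "finite K" and K: "K \<subseteq> {k0..k0 + int L}" and R: "R > 0"
  shows "real R * (\<Sum>k\<in>K. (cmod (Bf \<beta> X k))\<^sup>2)
    \<le> (2 * P + 2) * (2 * (real (L + R) * real R + 2 * (25/81) / \<delta>\<^sup>2)) * (\<Sum>x\<in>X. (cmod (\<beta> x))\<^sup>2)"
proof -
  define Q where "Q = real (L + R) * real R"
  define U where "U = (\<lambda>j. k0 + int j) ` {..<L + R}"
  define V where "V = int ` {..<R}"
  define M where "M = (2 * P + 2) * (2 * (Q + 2 * (25/81) / \<delta>\<^sup>2))"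
  define B where "B = Bf \<beta> X"
  have fU: "finite U" "finite V" unfolding U_def V_def by auto
  have step_a: "(\<Sum>k\<in>K. (cmod (B k))\<^sup>2) \<le> (\<Sum>u\<in>U. (cmod (B (u - v)))\<^sup>2)" if v: "v \<in> V" for v
  proof -
    obtain j where j: "j < R" "v = int j" using v unfolding V_def by auto
    have sub: "(\<lambda>k. k + v) ` K \<subseteq> U"
    proof
      fix u assume "u \<in> (\<lambda>k. k + v) ` K"
      then obtain k where k: "k \<in> K" "u = k + v" by auto
      have kr: "k0 \<le> k" "k \<le> k0 + int L" using k K by auto
      have "u = k0 + int (nat (u - k0))" using kr k j by simp
      moreover have "nat (u - k0) < L + R" using kr k j by linarith
      ultimately show "u \<in> U" unfolding U_def by blast
    qed
    have "(\<Sum>k\<in>K. (cmod (B k))\<^sup>2) = (\<Sum>u\<in>(\<lambda>k. k + v) ` K. (cmod (B (u - v)))\<^sup>2)"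
      by (subst sum.reindex) (auto simp: inj_on_def)
    also have "\<dots> \<le> (\<Sum>u\<in>U. (cmod (B (u - v)))\<^sup>2)"
      by (rule sum_mono2[OF fU(1) sub]) auto
    finally show ?thesis .
  qed
  have cV: "card V = R" unfolding V_def by (simp add: card_image)
  have "real R * (\<Sum>k\<in>K. (cmod (B k))\<^sup>2) = (\<Sum>v\<in>V. (\<Sum>k\<in>K. (cmod (B k))\<^sup>2))"
    using cV by simp
  also have "\<dots> \<le> (\<Sum>v\<in>V. \<Sum>u\<in>U. (cmod (B (u - v)))\<^sup>2)"
    by (rule sum_mono) (rule step_a)
  finally have A: "real R * (\<Sum>k\<in>K. (cmod (B k))\<^sup>2) \<le> (\<Sum>v\<in>V. \<Sum>u\<in>U. (cmod (B (u - v)))\<^sup>2)" .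
  define SU where "SU t = (\<Sum>u\<in>U. e (t * of_int u))" for t
  define SV where "SV t = (\<Sum>v\<in>V. e (- (t * of_int v)))" for t
  have expand: "complex_of_real (\<Sum>v\<in>V. \<Sum>u\<in>U. (cmod (B (u - v)))\<^sup>2)
      = (\<Sum>x\<in>X. \<Sum>x'\<in>X. \<beta> x * cnj (\<beta> x') * (SU (x - x') * SV (x - x')))"
  proof -
    have "complex_of_real (\<Sum>v\<in>V. \<Sum>u\<in>U. (cmod (B (u - v)))\<^sup>2)
        = (\<Sum>v\<in>V. \<Sum>u\<in>U. \<Sum>x\<in>X. \<Sum>x'\<in>X. \<beta> x * cnj (\<beta> x') * e ((x - x') * of_int (u - v)))"
      unfolding B_def by (simp only: of_real_sum Bsq)
    also have "\<dots> = (\<Sum>x\<in>X. \<Sum>x'\<in>X. \<Sum>v\<in>V. \<Sum>u\<in>U. \<beta> x * cnj (\<beta> x') * e ((x - x') * of_int (u - v)))"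
      by (rule swap4)
    also have "\<dots> = (\<Sum>x\<in>X. \<Sum>x'\<in>X. \<beta> x * cnj (\<beta> x') * (SU (x - x') * SV (x - x')))"
    proof (intro sum.cong refl)
      fix x x'
      have "SU (x - x') * SV (x - x') = (\<Sum>v\<in>V. \<Sum>u\<in>U. e ((x - x') * of_int u) * e (- ((x - x') * of_int v)))"
        unfolding SU_def SV_def sum_product by (rule sum.swap)
      also have "\<dots> = (\<Sum>v\<in>V. \<Sum>u\<in>U. e ((x - x') * of_int (u - v)))"
        by (intro sum.cong refl) (simp add: e_add[symmetric] algebra_simps)
      finally show "(\<Sum>v\<in>V. \<Sum>u\<in>U. \<beta> x * cnj (\<beta> x') * e ((x - x') * of_int (u - v)))
          = \<beta> x * cnj (\<beta> x') * (SU (x - x') * SV (x - x'))"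
        by (simp add: sum_distrib_left)
    qed
    finally show ?thesis .
  qed
  have kern: "cmod (SU (x - x')) * cmod (SV (x - x')) \<le> Hk Q (x' - x)" for x x'
  proof -
    have "cmod (SU (x - x')) = cmod (D (L + R) (x - x'))"
      unfolding SU_def U_def SU_eq by (simp add: norm_mult)
    moreover have "cmod (SV (x - x')) = cmod (D R (- (x - x')))"
      unfolding SV_def V_def SV_eq by simp
    moreover have "cmod (D (L + R) (x - x')) * cmod (D R (- (x - x'))) \<le> Hk (real (L + R) * real R) (x' - x)"
    proof (rule DD)
      show "\<bar>sin (pi * (x - x'))\<bar> = \<bar>sin (pi * (x' - x))\<bar>"
        by (metis abs_minus_cancel minus_diff_eq mult_minus_right sin_minus)
      show "\<bar>sin (pi * - (x - x'))\<bar> = \<bar>sin (pi * (x' - x))\<bar>" by simp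
    qed
    ultimately show ?thesis unfolding Q_def by simp
  qed
  have "(\<Sum>v\<in>V. \<Sum>u\<in>U. (cmod (B (u - v)))\<^sup>2) = cmod (complex_of_real (\<Sum>v\<in>V. \<Sum>u\<in>U. (cmod (B (u - v)))\<^sup>2))"
    by (subst norm_of_real, rule abs_of_nonneg[symmetric], intro sum_nonneg) auto
  also have "\<dots> = cmod (\<Sum>x\<in>X. \<Sum>x'\<in>X. \<beta> x * cnj (\<beta> x') * (SU (x - x') * SV (x - x')))"
    by (simp only: expand)
  also have "\<dots> \<le> (\<Sum>x\<in>X. cmod (\<Sum>x'\<in>X. \<beta> x * cnj (\<beta> x') * (SU (x - x') * SV (x - x'))))"
    by (rule norm_sum)
  also have "\<dots> \<le> (\<Sum>x\<in>X. \<Sum>x'\<in>X. cmod (\<beta> x * cnj (\<beta> x') * (SU (x - x') * SV (x - x'))))"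
    by (intro sum_mono norm_sum)
  also have "\<dots> \<le> (\<Sum>x\<in>X. \<Sum>x'\<in>X. cmod (\<beta> x) * cmod (\<beta> x') * Hk Q (x' - x))"
  proof (intro sum_mono)
    fix x x'
    have "cmod (\<beta> x * cnj (\<beta> x') * (SU (x - x') * SV (x - x')))
        = cmod (\<beta> x) * cmod (\<beta> x') * (cmod (SU (x - x')) * cmod (SV (x - x')))"
      by (simp add: norm_mult)
    also have "\<dots> \<le> cmod (\<beta> x) * cmod (\<beta> x') * Hk Q (x' - x)"
      by (intro mult_left_mono kern) auto
    finally show "cmod (\<beta> x * cnj (\<beta> x') * (SU (x - x') * SV (x - x'))) \<le> cmod (\<beta> x) * cmod (\<beta> x') * Hk Q (x' - x)" .
  qed
  also have "\<dots> \<le> M * (\<Sum>x\<in>X. (cmod (\<beta> x))\<^sup>2)"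
  proof (rule schur[OF fX])
    show "(\<Sum>x'\<in>X. Hk Q (x' - x)) \<le> M" if "x \<in> X" for x
      unfolding M_def by (rule window_sum[OF d fX spX XP _ P0]) (simp add: Q_def)
    show "Hk Q (- t) = Hk Q t" for t by (rule Hk_sym)
    show "Hk Q t \<ge> 0" for t by (rule Hk_nonneg) (simp add: Q_def)
  qed
  finally show ?thesis using A unfolding M_def Q_def B_def by linarith
qed


lemma duality:
  fixes c :: "int \<Rightarrow> complex"
  assumes fX: "finite X" and fK: "finite K" and C: "C \<ge> 0"
    and dual: "\<And>\<beta>. (\<Sum>k\<in>K. (cmod (Bf \<beta> X k))\<^sup>2) \<le> C * (\<Sum>x\<in>X. (cmod (\<beta> x))\<^sup>2)"
  shows "(\<Sum>x\<in>X. (cmod (\<Sum>k\<in>K. c k * e (x * of_int k)))\<^sup>2) \<le> C * (\<Sum>k\<in>K. (cmod (c k))\<^sup>2)"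
proof -
  define g where "g x = (\<Sum>k\<in>K. c k * e (x * of_int k))" for x
  define \<beta> where "\<beta> x = cnj (g x)" for x
  define S where "S = (\<Sum>x\<in>X. (cmod (g x))\<^sup>2)"
  define SC where "SC = (\<Sum>k\<in>K. (cmod (c k))\<^sup>2)"
  define SB where "SB = (\<Sum>k\<in>K. (cmod (Bf \<beta> X k))\<^sup>2)"
  have S0: "S \<ge> 0" unfolding S_def by (intro sum_nonneg) auto
  have SC0: "SC \<ge> 0" unfolding SC_def by (intro sum_nonneg) auto
  have SB: "SB \<le> C * S"
  proof -
    have "(\<Sum>x\<in>X. (cmod (\<beta> x))\<^sup>2) = S" unfolding S_def \<beta>_def by simp
    then show ?thesis unfolding SB_def using dual[of \<beta>] by simp
  qed
  have "complex_of_real S = (\<Sum>x\<in>X. g x * cnj (g x))"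
    unfolding S_def of_real_sum by (intro sum.cong refl complex_norm_square)
  also have "\<dots> = (\<Sum>x\<in>X. \<Sum>k\<in>K. c k * (\<beta> x * e (x * of_int k)))"
  proof (intro sum.cong refl)
    fix x
    have "g x * cnj (g x) = (\<Sum>k\<in>K. c k * e (x * of_int k)) * \<beta> x"
      by (simp only: g_def \<beta>_def)
    also have "\<dots> = (\<Sum>k\<in>K. c k * e (x * of_int k) * \<beta> x)"
      by (rule sum_distrib_right)
    also have "\<dots> = (\<Sum>k\<in>K. c k * (\<beta> x * e (x * of_int k)))"
      by (intro sum.cong refl) (simp add: mult_ac)
    finally show "g x * cnj (g x) = (\<Sum>k\<in>K. c k * (\<beta> x * e (x * of_int k)))" .
  qed
  also have "\<dots> = (\<Sum>k\<in>K. c k * Bf \<beta> X k)"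
    unfolding Bf_def by (subst sum.swap) (simp only: sum_distrib_left)
  finally have eq: "complex_of_real S = (\<Sum>k\<in>K. c k * Bf \<beta> X k)" .
  have "S = cmod (complex_of_real S)" using S0 by simp
  also have "\<dots> \<le> (\<Sum>k\<in>K. cmod (c k * Bf \<beta> X k))" unfolding eq by (rule norm_sum)
  also have "\<dots> = (\<Sum>k\<in>K. \<bar>cmod (c k)\<bar> * \<bar>cmod (Bf \<beta> X k)\<bar>)" by (simp add: norm_mult)
  also have "\<dots> \<le> L2_set (\<lambda>k. cmod (c k)) K * L2_set (\<lambda>k. cmod (Bf \<beta> X k)) K"
    by (rule L2_set_mult_ineq)
  also have "\<dots> = sqrt SC * sqrt SB" unfolding L2_set_def SC_def SB_def by simp
  finally have le: "S \<le> sqrt SC * sqrt SB" .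
  show ?thesis
  proof (cases "S = 0")
    case True then show ?thesis using C SC0 unfolding S_def g_def SC_def by simp
  next
    case False
    then have Sp: "S > 0" using S0 by simp
    have SB0: "SB \<ge> 0" unfolding SB_def by (intro sum_nonneg) auto
    have "S * S \<le> (sqrt SC * sqrt SB) * (sqrt SC * sqrt SB)" using le S0 by (intro mult_mono) auto
    also have "\<dots> = sqrt (SC * SB) * sqrt (SC * SB)" by (simp add: real_sqrt_mult)
    also have "\<dots> = SC * SB" using SC0 SB0 by simp
    also have "\<dots> \<le> SC * (C * S)" using SB SC0 by (intro mult_left_mono)
    finally have "S * S \<le> (C * SC) * S" by (simp add: mult_ac)
    then have "S \<le> C * SC" using Sp by simp
    then show ?thesis unfolding S_def g_def SC_def .
  qed
qed

lemma cs_count: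
  fixes u :: "'a \<Rightarrow> real"
  assumes "finite A"
  shows "(\<Sum>x\<in>A. u x)\<^sup>2 \<le> real (card A) * (\<Sum>x\<in>A. (u x)\<^sup>2)"
proof -
  have "\<bar>\<Sum>x\<in>A. u x\<bar> \<le> (\<Sum>x\<in>A. \<bar>u x\<bar> * \<bar>1\<bar>)" by (simp add: sum_abs)
  also have "\<dots> \<le> L2_set u A * L2_set (\<lambda>_. 1) A" by (rule L2_set_mult_ineq)
  also have "\<dots> = sqrt (\<Sum>x\<in>A. (u x)\<^sup>2) * sqrt (real (card A))" unfolding L2_set_def by simp
  finally have le: "\<bar>\<Sum>x\<in>A. u x\<bar> \<le> sqrt (\<Sum>x\<in>A. (u x)\<^sup>2) * sqrt (real (card A))" .
  have "(\<Sum>x\<in>A. u x)\<^sup>2 = \<bar>\<Sum>x\<in>A. u x\<bar> * \<bar>\<Sum>x\<in>A. u x\<bar>" by (simp add: power2_eq_square)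
  also have "\<dots> \<le> (sqrt (\<Sum>x\<in>A. (u x)\<^sup>2) * sqrt (real (card A))) * (sqrt (\<Sum>x\<in>A. (u x)\<^sup>2) * sqrt (real (card A)))"
    using le by (intro mult_mono) auto
  also have "\<dots> = sqrt ((\<Sum>x\<in>A. (u x)\<^sup>2) * real (card A)) * sqrt ((\<Sum>x\<in>A. (u x)\<^sup>2) * real (card A))"
    by (simp add: real_sqrt_mult)
  also have "\<dots> = (\<Sum>x\<in>A. (u x)\<^sup>2) * real (card A)"
    by (simp add: sum_nonneg)
  finally show ?thesis by (simp add: mult.commute)
qed

lemma large_sieve:
  fixes c :: "int \<Rightarrow> complex" and L :: nat
  assumes d: "\<delta> > 0" and fX: "finite X" and spX: "sp \<delta> X" and XP: "X \<subseteq> {-P..P}"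
    and P0: "P > 0" and dP: "\<delta> \<le> 2 * P"
    and fK: "finite K" and K: "K \<subseteq> {k0..k0 + int L}"
  shows "(\<Sum>x\<in>X. (cmod (\<Sum>k\<in>K. c k * e (x * of_int k)))\<^sup>2)
     \<le> 9 * (P + 2) * (real L / 2 + 1 / \<delta>) * (\<Sum>k\<in>K. (cmod (c k))\<^sup>2)"
proof (cases "\<delta> < 1/2")
  case True
  define R where "R = nat \<lceil>1 / \<delta>\<rceil>"
  have R1: "real R \<ge> 1 / \<delta>" unfolding R_def by linarith
  have R2: "real R \<le> 1 / \<delta> + 1"
  proof -
    have "1 / \<delta> > 0" using d by simp
    moreover have "real_of_int \<lceil>1 / \<delta>\<rceil> \<ge> 1 / \<delta>" by (rule le_of_int_ceiling)
    ultimately have "real_of_int \<lceil>1 / \<delta>\<rceil> \<ge> 0" by linarith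
    then have c0: "\<lceil>1 / \<delta>\<rceil> \<ge> 0" by simp
    then have "real R = real_of_int \<lceil>1 / \<delta>\<rceil>" unfolding R_def by simp
    then show ?thesis using ceiling_correct[of "1 / \<delta>"] by linarith
  qed
  have id: "1 / \<delta> > 2" using True d by (simp add: field_simps)
  have Rp: "R > 0" using R1 id by linarith
  define C where "C = (2 * P + 2) * (2 * real L + 9/2 / \<delta>)"
  have C0: "C \<ge> 0" unfolding C_def using P0 d by simp
  have key: "2 * (real (L + R) * real R) + 2 * 2 * (25/81) / \<delta>\<^sup>2 \<le> real R * (2 * real L + 9/2 / \<delta>)"
  proof -
    have a: "2 * (real R * real R) \<le> 3 * (real R / \<delta>)"
    proof -
      have "real R \<le> 3/2 * (1 / \<delta>)" using R2 id by linarith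
      then have "real R * real R \<le> real R * (3/2 * (1 / \<delta>))" by (intro mult_left_mono) auto
      then show ?thesis by simp
    qed
    have b: "1 / \<delta>\<^sup>2 \<le> real R / \<delta>"
    proof -
      have "1 / \<delta> * (1 / \<delta>) \<le> real R * (1 / \<delta>)" using R1 d by (intro mult_right_mono) auto
      then show ?thesis by (simp add: power2_eq_square)
    qed
    have "2 * (real (L + R) * real R) + 2 * 2 * (25/81) / \<delta>\<^sup>2
        = 2 * real L * real R + 2 * (real R * real R) + 100/81 * (1 / \<delta>\<^sup>2)"
      by (simp add: algebra_simps)
    also have "\<dots> \<le> 2 * real L * real R + 3 * (real R / \<delta>) + 100/81 * (real R / \<delta>)"
      using a b by linarith
    also have "\<dots> \<le> real R * (2 * real L + 9/2 / \<delta>)"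
      using d Rp by (simp add: algebra_simps divide_simps)
    finally show ?thesis .
  qed
  have dual: "(\<Sum>k\<in>K. (cmod (Bf \<beta> X k))\<^sup>2) \<le> C * (\<Sum>x\<in>X. (cmod (\<beta> x))\<^sup>2)" for \<beta>
  proof -
    have "real R * (\<Sum>k\<in>K. (cmod (Bf \<beta> X k))\<^sup>2)
      \<le> (2 * P + 2) * (2 * (real (L + R) * real R + 2 * (25/81) / \<delta>\<^sup>2)) * (\<Sum>x\<in>X. (cmod (\<beta> x))\<^sup>2)"
      by (rule dual_bound[OF d fX spX XP _ fK K Rp]) (use P0 in simp)
    also have "\<dots> \<le> (2 * P + 2) * (real R * (2 * real L + 9/2 / \<delta>)) * (\<Sum>x\<in>X. (cmod (\<beta> x))\<^sup>2)"
      using key P0 by (intro mult_right_mono mult_left_mono) (auto intro: sum_nonneg simp: algebra_simps)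
    also have "\<dots> = real R * (C * (\<Sum>x\<in>X. (cmod (\<beta> x))\<^sup>2))" unfolding C_def by (simp add: mult_ac)
    finally show ?thesis using Rp by simp
  qed
  have "(\<Sum>x\<in>X. (cmod (\<Sum>k\<in>K. c k * e (x * of_int k)))\<^sup>2) \<le> C * (\<Sum>k\<in>K. (cmod (c k))\<^sup>2)"
    by (rule duality[OF fX fK C0 dual])
  also have "C \<le> 9 * (P + 2) * (real L / 2 + 1 / \<delta>)"
  proof -
    have "C = 4 * (P + 1) * real L + 9 * (P + 1) * (1 / \<delta>)" unfolding C_def using d by (simp add: field_simps)
    also have "\<dots> \<le> 9/2 * (P + 2) * real L + 9 * (P + 2) * (1 / \<delta>)"
      using P0 d by (intro add_mono mult_right_mono) auto
    also have "\<dots> = 9 * (P + 2) * (real L / 2 + 1 / \<delta>)" by (simp add: algebra_simps)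
    finally show ?thesis .
  qed
  then have "C * (\<Sum>k\<in>K. (cmod (c k))\<^sup>2) \<le> 9 * (P + 2) * (real L / 2 + 1 / \<delta>) * (\<Sum>k\<in>K. (cmod (c k))\<^sup>2)"
    by (intro mult_right_mono sum_nonneg) auto
  finally show ?thesis .
next
  case False
  define N where "N = real (card X)"
  have NX: "N \<le> (P - - P) / \<delta> + 1" unfolding N_def by (rule bucket[OF fX spX d XP]) (use P0 in simp)
  have cK: "real (card K) \<le> real L + 1"
  proof -
    have "card K \<le> card {k0..k0 + int L}" by (rule card_mono[OF _ K]) simp
    then show ?thesis by simp
  qed
  have "(\<Sum>x\<in>X. (cmod (\<Sum>k\<in>K. c k * e (x * of_int k)))\<^sup>2) \<le> (\<Sum>x\<in>X. real (card K) * (\<Sum>k\<in>K. (cmod (c k))\<^sup>2))"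
  proof (rule sum_mono)
    fix x
    have "cmod (\<Sum>k\<in>K. c k * e (x * of_int k)) \<le> (\<Sum>k\<in>K. cmod (c k * e (x * of_int k)))" by (rule norm_sum)
    also have "\<dots> = (\<Sum>k\<in>K. cmod (c k))" by (simp add: norm_mult)
    finally have "(cmod (\<Sum>k\<in>K. c k * e (x * of_int k)))\<^sup>2 \<le> (\<Sum>k\<in>K. cmod (c k))\<^sup>2"
      by (intro power_mono) auto
    also have "\<dots> \<le> real (card K) * (\<Sum>k\<in>K. (cmod (c k))\<^sup>2)" by (rule cs_count[OF fK])
    finally show "(cmod (\<Sum>k\<in>K. c k * e (x * of_int k)))\<^sup>2 \<le> real (card K) * (\<Sum>k\<in>K. (cmod (c k))\<^sup>2)" .
  qed
  also have "\<dots> = N * real (card K) * (\<Sum>k\<in>K. (cmod (c k))\<^sup>2)" unfolding N_def by simp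
  also have "N * real (card K) \<le> 9 * (P + 2) * (real L / 2 + 1 / \<delta>)"
  proof -
    have d2: "\<delta> \<ge> 1/2" using False by simp
    have "N * real (card K) \<le> (2 * P / \<delta> + 1) * (real L + 1)"
      using NX cK by (intro mult_mono) (auto simp: N_def)
    also have "\<dots> = 2 * P * real L * (1 / \<delta>) + (2 * P / \<delta> + 1) + real L" using d by (simp add: field_simps)
    also have "\<dots> \<le> 2 * P * real L * 2 + 4 * P / \<delta> + real L"
    proof -
      have "1 / \<delta> \<le> 2" using d2 d by (simp add: field_simps)
      then have "2 * P * real L * (1 / \<delta>) \<le> 2 * P * real L * 2" using P0 by (intro mult_left_mono) auto
      moreover have "1 \<le> 2 * P / \<delta>" using dP d by (simp add: field_simps)
      ultimately show ?thesis by linarith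
    qed
    also have "\<dots> \<le> 9 * (P + 2) * (real L / 2 + 1 / \<delta>)"
    proof -
      have "0 \<le> P * real L" using P0 by simp
      moreover have "0 \<le> P / \<delta>" "0 \<le> 1 / \<delta>" using P0 d by auto
      moreover have "9 * (P + 2) * (real L / 2 + 1 / \<delta>) = 9/2 * (P * real L) + 9 * real L + 9 * (P / \<delta>) + 18 * (1 / \<delta>)"
        using d by (simp add: field_simps)
      moreover have "2 * P * real L * 2 + 4 * P / \<delta> + real L = 4 * (P * real L) + 4 * (P / \<delta>) + real L"
        by simp
      ultimately show ?thesis by linarith
    qed
    finally show ?thesis .
  qed
  then have "N * real (card K) * (\<Sum>k\<in>K. (cmod (c k))\<^sup>2) \<le> 9 * (P + 2) * (real L / 2 + 1 / \<delta>) * (\<Sum>k\<in>K. (cmod (c k))\<^sup>2)"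
    by (intro mult_right_mono sum_nonneg) auto
  finally show ?thesis .
qed

theorem theorem1:
  fixes \<delta> P :: real and X :: "real set" and I :: "'i set"
    and y :: "'i \<Rightarrow> int" and a :: "'i \<Rightarrow> complex"
  assumes "\<delta> > 0" and "P > 0"
    and "delta_spaced \<delta> X" and "X \<subseteq> {-P..P}"
    and "finite I"
  shows "(\<Sum>x\<in>X. (cmod (\<Sum>i\<in>I. a i * e (x * real_of_int (y i))))\<^sup>2)
    \<le> pi * sqrt (real (card X) * Delta I y + real (card X) / \<delta>) * sqrt (P + 2)
        * sqrt (SUP k::int. real (A_count I y k)) * (\<Sum>i\<in>I. (cmod (a i))\<^sup>2)"
proof (cases "I = {}")
  case True then show ?thesis by simp
next
  case False
  note d = assms(1) and P0 = assms(2) and XP = assms(4) and fI = assms(5)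
  have fX: "finite X" and cX: "card X \<ge> 2" and spX: "sp \<delta> X"
    using assms(3) unfolding delta_spaced_def sp_def by auto
  have dP: "\<delta> \<le> 2 * P"
  proof -
    obtain x1 where x1: "x1 \<in> X" using cX by fastforce
    have "card (X - {x1}) \<ge> 1" using cX x1 fX by simp
    then have "X - {x1} \<noteq> {}" by (metis card.empty not_one_le_zero)
    then obtain x2 where x2: "x2 \<in> X" "x2 \<noteq> x1" by blast
    have "\<bar>x1 - x2\<bar> \<ge> \<delta>" using spX x1 x2 unfolding sp_def by auto
    moreover have "\<bar>x1 - x2\<bar> \<le> 2 * P"
    proof -
      have "x1 \<in> {-P..P}" "x2 \<in> {-P..P}" using x1 x2 XP by auto
      then show ?thesis by auto
    qed
    ultimately show ?thesis by linarith
  qed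
  define f where "f x = (\<Sum>i\<in>I. a i * e (x * real_of_int (y i)))" for x
  define n2 where "n2 = (\<Sum>i\<in>I. (cmod (a i))\<^sup>2)"
  define S where "S = (SUP k::int. real (A_count I y k))"
  define N where "N = real (card X)"
  define \<Delta> where "\<Delta> = Delta I y"
  define \<phi> where "\<phi> p = y (fst p) + y (snd p)" for p
  define K where "K = \<phi> ` (I \<times> I)"
  define G where "G k = {p \<in> I \<times> I. \<phi> p = k}" for k
  define c where "c k = (\<Sum>p\<in>G k. a (fst p) * a (snd p))" for k
  define m where "m = Min (y ` I)"
  define Mx where "Mx = Max (y ` I)"
  define L where "L = 2 * nat (Mx - m)"
  have fK: "finite K" unfolding K_def using fI by simp
  have ym: "m \<le> y i" "y i \<le> Mx" if "i \<in> I" for i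
    using that fI unfolding m_def Mx_def by auto
  obtain im where im: "im \<in> I" "y im = m" unfolding m_def using False fI
    by (metis (mono_tags, lifting) Min_in finite_imageI image_iff image_is_empty)
  obtain iM where iM: "iM \<in> I" "y iM = Mx" unfolding Mx_def using False fI
    by (metis (mono_tags, lifting) Max_in finite_imageI image_iff image_is_empty)
  have mM: "m \<le> Mx" using ym im by auto
  have KL: "K \<subseteq> {2 * m..2 * m + int L}"
  proof
    fix k assume "k \<in> K"
    then obtain i j where ij: "i \<in> I" "j \<in> I" "k = y i + y j" unfolding K_def \<phi>_def by auto
    then show "k \<in> {2 * m..2 * m + int L}" using ym[OF ij(1)] ym[OF ij(2)] mM unfolding L_def by simp
  qed
  have LD: "real L \<le> 2 * \<Delta>"
  proof -
    have "real_of_int \<bar>y iM - y im\<bar> \<le> Delta I y"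
      unfolding Delta_def using False fI iM(1) im(1) by (auto intro!: Max_ge)
    then show ?thesis unfolding L_def \<Delta>_def using iM im mM by simp
  qed
  have D0: "\<Delta> \<ge> 0" using LD by simp
  have Abdd: "real (A_count I y k) \<le> real (card (I \<times> I))" for k
    unfolding A_count_def using fI by (intro of_nat_mono card_mono) auto
  have bdd: "bdd_above (range (\<lambda>k::int. real (A_count I y k)))"
    by (rule bdd_aboveI2[where M="real (card (I \<times> I))"]) (rule Abdd)
  have AS: "real (A_count I y k) \<le> S" for k unfolding S_def by (rule cSUP_upper[OF _ bdd]) simp
  have S0: "S \<ge> 0" using AS[of 0] by simp
  have n20: "n2 \<ge> 0" unfolding n2_def by (intro sum_nonneg) auto
  have Fsq: "f x * f x = (\<Sum>k\<in>K. c k * e (x * of_int k))" for x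
  proof -
    have "f x * f x = (\<Sum>i\<in>I. \<Sum>j\<in>I. (a i * e (x * real_of_int (y i))) * (a j * e (x * real_of_int (y j))))"
      unfolding f_def by (rule sum_product)
    also have "\<dots> = (\<Sum>p\<in>I \<times> I. a (fst p) * a (snd p) * e (x * of_int (\<phi> p)))"
      unfolding sum.cartesian_product
      by (intro sum.cong refl) (auto simp: \<phi>_def e_add[symmetric] distrib_left mult_ac)
    also have "\<dots> = (\<Sum>k\<in>K. \<Sum>p\<in>G k. a (fst p) * a (snd p) * e (x * of_int (\<phi> p)))"
      unfolding K_def G_def using fI by (intro sum.image_gen) simp
    also have "\<dots> = (\<Sum>k\<in>K. c k * e (x * of_int k))"
      unfolding c_def sum_distrib_right by (intro sum.cong refl) (auto simp: G_def)
    finally show ?thesis .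
  qed
  have c_bound: "(\<Sum>k\<in>K. (cmod (c k))\<^sup>2) \<le> S * n2\<^sup>2"
  proof -
    have "(cmod (c k))\<^sup>2 \<le> S * (\<Sum>p\<in>G k. (cmod (a (fst p) * a (snd p)))\<^sup>2)" for k
    proof -
      have fG: "finite (G k)" unfolding G_def using fI by simp
      have "cmod (c k) \<le> (\<Sum>p\<in>G k. cmod (a (fst p) * a (snd p)))" unfolding c_def by (rule norm_sum)
      then have "(cmod (c k))\<^sup>2 \<le> (\<Sum>p\<in>G k. cmod (a (fst p) * a (snd p)))\<^sup>2" by (intro power_mono) auto
      also have "\<dots> \<le> real (card (G k)) * (\<Sum>p\<in>G k. (cmod (a (fst p) * a (snd p)))\<^sup>2)"
        by (rule cs_count[OF fG])
      also have "\<dots> \<le> S * (\<Sum>p\<in>G k. (cmod (a (fst p) * a (snd p)))\<^sup>2)"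
      proof (rule mult_right_mono)
        have "card (G k) = A_count I y k" unfolding G_def A_count_def \<phi>_def
          by (intro arg_cong[where f=card]) auto
        then show "real (card (G k)) \<le> S" using AS[of k] by simp
      qed (intro sum_nonneg, auto)
      finally show ?thesis .
    qed
    then have "(\<Sum>k\<in>K. (cmod (c k))\<^sup>2) \<le> (\<Sum>k\<in>K. S * (\<Sum>p\<in>G k. (cmod (a (fst p) * a (snd p)))\<^sup>2))"
      by (intro sum_mono)
    also have "\<dots> = S * (\<Sum>p\<in>I \<times> I. (cmod (a (fst p) * a (snd p)))\<^sup>2)"
      unfolding sum_distrib_left[symmetric] K_def G_def using fI by (subst sum.image_gen[symmetric]) auto
    also have "(\<Sum>p\<in>I \<times> I. (cmod (a (fst p) * a (snd p)))\<^sup>2) = n2\<^sup>2"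
    proof -
      have "(\<Sum>p\<in>I \<times> I. (cmod (a (fst p) * a (snd p)))\<^sup>2) = (\<Sum>i\<in>I. \<Sum>j\<in>I. (cmod (a i))\<^sup>2 * (cmod (a j))\<^sup>2)"
        by (simp add: sum.cartesian_product norm_mult power_mult_distrib case_prod_beta)
      also have "\<dots> = n2 * n2" unfolding n2_def by (rule sum_product[symmetric])
      finally show ?thesis by (simp add: power2_eq_square)
    qed
    finally show ?thesis .
  qed
  have LS: "(\<Sum>x\<in>X. (cmod (\<Sum>k\<in>K. c k * e (x * of_int k)))\<^sup>2)
     \<le> 9 * (P + 2) * (real L / 2 + 1 / \<delta>) * (\<Sum>k\<in>K. (cmod (c k))\<^sup>2)"
    by (rule large_sieve[OF d fX spX XP P0 dP fK KL])
  define LHS where "LHS = (\<Sum>x\<in>X. (cmod (f x))\<^sup>2)"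
  have LHS0: "LHS \<ge> 0" unfolding LHS_def by (intro sum_nonneg) auto
  have "LHS\<^sup>2 \<le> N * (\<Sum>x\<in>X. ((cmod (f x))\<^sup>2)\<^sup>2)"
    unfolding LHS_def N_def by (rule cs_count[OF fX])
  also have "(\<Sum>x\<in>X. ((cmod (f x))\<^sup>2)\<^sup>2) = (\<Sum>x\<in>X. (cmod (\<Sum>k\<in>K. c k * e (x * of_int k)))\<^sup>2)"
    by (intro sum.cong refl) (simp add: Fsq[symmetric] norm_mult power2_eq_square)
  also have "N * \<dots> \<le> N * (9 * (P + 2) * (real L / 2 + 1 / \<delta>) * (S * n2\<^sup>2))"
  proof (intro mult_left_mono)
    show "0 \<le> N" unfolding N_def by simp
    have "9 * (P + 2) * (real L / 2 + 1 / \<delta>) \<ge> 0" using P0 d by simp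
    then show "(\<Sum>x\<in>X. (cmod (\<Sum>k\<in>K. c k * e (x * of_int k)))\<^sup>2) \<le> 9 * (P + 2) * (real L / 2 + 1 / \<delta>) * (S * n2\<^sup>2)"
      using LS c_bound by (meson mult_left_mono order_trans)
  qed
  also have "\<dots> \<le> pi\<^sup>2 * (N * \<Delta> + N / \<delta>) * (P + 2) * S * n2\<^sup>2"
  proof -
    have pi9: "pi\<^sup>2 \<ge> 9"
    proof -
      have "pi \<ge> 3" using pi_approx(1) by simp
      then have "pi * pi \<ge> 3 * 3" by (intro mult_mono) auto
      then show ?thesis by (simp add: power2_eq_square)
    qed
    have a1: "real L / 2 + 1 / \<delta> \<le> \<Delta> + 1 / \<delta>" using LD by simp
    have nn: "0 \<le> N * (P + 2) * S * n2\<^sup>2" unfolding N_def using P0 S0 by simp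
    have "N * (9 * (P + 2) * (real L / 2 + 1 / \<delta>) * (S * n2\<^sup>2)) = 9 * (real L / 2 + 1 / \<delta>) * (N * (P + 2) * S * n2\<^sup>2)"
      by (simp only: ac_simps)
    also have "\<dots> \<le> pi\<^sup>2 * (\<Delta> + 1 / \<delta>) * (N * (P + 2) * S * n2\<^sup>2)"
      using pi9 a1 nn d D0 by (intro mult_right_mono mult_mono) auto
    also have "\<dots> = pi\<^sup>2 * (N * \<Delta> + N / \<delta>) * (P + 2) * S * n2\<^sup>2"
      by (simp add: algebra_simps add_divide_distrib)
    finally show ?thesis .
  qed
  finally have sq: "LHS\<^sup>2 \<le> pi\<^sup>2 * (N * \<Delta> + N / \<delta>) * (P + 2) * S * n2\<^sup>2" .
  have ND: "N * \<Delta> + N / \<delta> \<ge> 0" unfolding N_def using D0 d by simp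
  have "LHS \<le> sqrt (pi\<^sup>2 * (N * \<Delta> + N / \<delta>) * (P + 2) * S * n2\<^sup>2)"
    using sq LHS0 by (simp add: real_le_rsqrt)
  also have "\<dots> = pi * sqrt (N * \<Delta> + N / \<delta>) * sqrt (P + 2) * sqrt S * n2"
    using n20 by (simp add: real_sqrt_mult)
  finally show ?thesis unfolding LHS_def f_def N_def \<Delta>_def S_def n2_def .
qed

end
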